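(* Let $\mathbf A$ be a residuated semigroup satisfying $xx=x$ and $x\backslash x=y/y$ for all $x,y$. Then the element $1:=a\backslash a$ does not depend on $a$, it is the greatest element and a global identity of $\mathbf A$; $\langle A,\le\rangle$ is a meet-semilattice whose meet is $x\wedge y=xy$; and $x\wedge y\le z\iff y\le x\backslash z$ for all $x,y,z$, so $\langle A,\wedge,\backslash,1\rangle$ is a Brouwerian semilattice. In particular, every integrally closed residuated monoid satisfying $xx=x$ is a Brouwerian semilattice in this way.
   Context: A residuated semigroup is a structure $\langle A,\le,\cdot,\backslash,/\rangle$ where $\langle A,\le\rangle$ is a poset, $\langle A,\cdot\rangle$ is a semigroup, and $xy\le z\iff x\le z/y\iff y\le x\backslash z$. A residuated monoid is a residuated semigroup with a global identity $1$ ($1a=a=a1$); it is integrally closed if $x\backslash x=1$ for all $x$. A Brouwerian semilattice is a meet-semilattice $\langle A,\wedge\rangle$ with top element $1$ and a binary operation $\to$ such that $x\wedge y\le z\iff y\le x\to z$. *)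

theory Defs
  imports Main
begin

definition poset :: "('a \<Rightarrow> 'a \<Rightarrow> bool) \<Rightarrow> bool" where
  "poset le \<longleftrightarrow> (\<forall>x. le x x) \<and> (\<forall>x y. le x y \<and> le y x \<longrightarrow> x = y)
     \<and> (\<forall>x y z. le x y \<and> le y z \<longrightarrow> le x z)"

definition residuated_semigroup ::
  "('a \<Rightarrow> 'a \<Rightarrow> bool) \<Rightarrow> ('a \<Rightarrow> 'a \<Rightarrow> 'a) \<Rightarrow> ('a \<Rightarrow> 'a \<Rightarrow> 'a) \<Rightarrow> ('a \<Rightarrow> 'a \<Rightarrow> 'a) \<Rightarrow> bool" where
  "residuated_semigroup le mult ldiv rdiv \<longleftrightarrow> poset le
     \<and> (\<forall>x y z. mult (mult x y) z = mult x (mult y z))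
     \<and> (\<forall>x y z. (le (mult x y) z \<longleftrightarrow> le x (rdiv z y)) \<and> (le (mult x y) z \<longleftrightarrow> le y (ldiv x z)))"

definition residuated_monoid ::
  "('a \<Rightarrow> 'a \<Rightarrow> bool) \<Rightarrow> ('a \<Rightarrow> 'a \<Rightarrow> 'a) \<Rightarrow> ('a \<Rightarrow> 'a \<Rightarrow> 'a) \<Rightarrow> ('a \<Rightarrow> 'a \<Rightarrow> 'a) \<Rightarrow> 'a \<Rightarrow> bool" where
  "residuated_monoid le mult ldiv rdiv one \<longleftrightarrow> residuated_semigroup le mult ldiv rdiv
     \<and> (\<forall>a. mult one a = a \<and> mult a one = a)"

definition integrally_closed ::
  "('a \<Rightarrow> 'a \<Rightarrow> 'a) \<Rightarrow> 'a \<Rightarrow> bool" where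
  "integrally_closed ldiv one \<longleftrightarrow> (\<forall>x. ldiv x x = one)"

definition meet_semilattice :: "('a \<Rightarrow> 'a \<Rightarrow> bool) \<Rightarrow> ('a \<Rightarrow> 'a \<Rightarrow> 'a) \<Rightarrow> bool" where
  "meet_semilattice le meet \<longleftrightarrow> poset le
     \<and> (\<forall>x y. le (meet x y) x \<and> le (meet x y) y)
     \<and> (\<forall>x y z. le z x \<and> le z y \<longrightarrow> le z (meet x y))"

definition brouwerian_semilattice ::
  "('a \<Rightarrow> 'a \<Rightarrow> bool) \<Rightarrow> ('a \<Rightarrow> 'a \<Rightarrow> 'a) \<Rightarrow> ('a \<Rightarrow> 'a \<Rightarrow> 'a) \<Rightarrow> 'a \<Rightarrow> bool" where
  "brouwerian_semilattice le meet imp tp \<longleftrightarrow> meet_semilattice le meet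
     \<and> (\<forall>x. le x tp)
     \<and> (\<forall>x y z. le (meet x y) z \<longleftrightarrow> le y (imp x z))"

end

theory Submission
  imports Defs
begin

lemma rs_mono:
  assumes "residuated_semigroup le mult ldiv rdiv" "le y z" "le a b"
  shows "le (mult y a) (mult z b)"
proof -
  have P: "poset le" and R: "\<And>x y z. (le (mult x y) z \<longleftrightarrow> le x (rdiv z y)) \<and> (le (mult x y) z \<longleftrightarrow> le y (ldiv x z))"
    using assms(1) unfolding residuated_semigroup_def by blast+
  have refl: "\<And>x. le x x" and tr: "\<And>x y z. le x y \<Longrightarrow> le y z \<Longrightarrow> le x z"
    using P unfolding poset_def by blast+
  have "le b (ldiv z (mult z b))" using R refl by blast
  hence "le a (ldiv z (mult z b))" using tr assms(3) by blast
  hence "le (mult z a) (mult z b)" using R by blast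
  hence "le z (rdiv (mult z b) a)" using R by blast
  hence "le y (rdiv (mult z b) a)" using tr assms(2) by blast
  thus ?thesis using R by blast
qed

lemma core:
  assumes RS: "residuated_semigroup le mult ldiv rdiv" and idem: "\<forall>x. mult x x = x"
    and top: "\<forall>x. le x one" and idl: "\<forall>x. mult one x = x \<and> mult x one = x"
  shows "meet_semilattice le mult \<and> brouwerian_semilattice le mult ldiv one"
proof -
  have P: "poset le" and R: "\<And>x y z. (le (mult x y) z \<longleftrightarrow> le x (rdiv z y)) \<and> (le (mult x y) z \<longleftrightarrow> le y (ldiv x z))"
    using RS unfolding residuated_semigroup_def by blast+
  have refl: "\<And>x. le x x"
    using P unfolding poset_def by blast+
  have lb: "\<And>x y. le (mult x y) x \<and> le (mult x y) y"
  proof -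
    fix x y
    have "le (mult x y) (mult x one)" using rs_mono[OF RS refl] top by blast
    moreover have "le (mult x y) (mult one y)" using rs_mono[OF RS _ refl] top by blast
    ultimately show "le (mult x y) x \<and> le (mult x y) y" using idl by simp
  qed
  have glb: "\<And>x y z. le z x \<and> le z y \<longrightarrow> le z (mult x y)"
    using rs_mono[OF RS] idem by metis
  have M: "meet_semilattice le mult" unfolding meet_semilattice_def using P lb glb by blast
  thus ?thesis unfolding brouwerian_semilattice_def using top R by blast
qed

theorem corollary7p3:
  shows
  "(\<forall>(le :: 'a \<Rightarrow> 'a \<Rightarrow> bool) mult ldiv rdiv.
      residuated_semigroup le mult ldiv rdiv
      \<and> (\<forall>x. mult x x = x) \<and> (\<forall>x y. ldiv x x = rdiv y y)
      \<longrightarrow> (\<exists>one. (\<forall>a. ldiv a a = one)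
             \<and> (\<forall>x. le x one)
             \<and> (\<forall>x. mult one x = x \<and> mult x one = x)
             \<and> meet_semilattice le mult
             \<and> (\<forall>x y z. le (mult x y) z \<longleftrightarrow> le y (ldiv x z))
             \<and> brouwerian_semilattice le mult ldiv one))
   \<and> (\<forall>(le :: 'a \<Rightarrow> 'a \<Rightarrow> bool) mult ldiv rdiv one.
      residuated_monoid le mult ldiv rdiv one \<and> integrally_closed ldiv one
      \<and> (\<forall>x. mult x x = x)
      \<longrightarrow> brouwerian_semilattice le mult ldiv one)"
proof (intro conjI allI impI)
  fix le :: "'a \<Rightarrow> 'a \<Rightarrow> bool" and mult ldiv rdiv
  assume A: "residuated_semigroup le mult ldiv rdiv
      \<and> (\<forall>x. mult x x = x) \<and> (\<forall>x y. ldiv x x = rdiv y y)"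
  hence RS: "residuated_semigroup le mult ldiv rdiv" and idem: "\<forall>x. mult x x = x"
    and E: "\<forall>x y. ldiv x x = rdiv y y" by blast+
  have P: "poset le" and R: "\<And>x y z. (le (mult x y) z \<longleftrightarrow> le x (rdiv z y)) \<and> (le (mult x y) z \<longleftrightarrow> le y (ldiv x z))"
    using RS unfolding residuated_semigroup_def by blast+
  have refl: "\<And>x. le x x" and anti: "\<And>x y. le x y \<Longrightarrow> le y x \<Longrightarrow> x = y"
    using P unfolding poset_def by blast+
  define one where "one = ldiv (SOME a. True) (SOME a. True)"
  have c1: "\<forall>a. ldiv a a = one" using E unfolding one_def by metis
  have c2: "\<forall>a. rdiv a a = one" using E c1 by metis
  have top: "\<forall>x. le x one"
  proof
    fix x have "le (mult x x) x" using idem refl by simp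
    thus "le x one" using R c2 by metis
  qed
  have idl: "\<forall>x. mult one x = x \<and> mult x one = x"
  proof
    fix x
    have a1: "le (mult x one) x" using R refl c1 by metis
    have a2: "le (mult one x) x" using R refl c2 by metis
    have b1: "le x (mult x one)" using rs_mono[OF RS refl] top idem by metis
    have b2: "le x (mult one x)" using rs_mono[OF RS _ refl] top idem by metis
    show "mult one x = x \<and> mult x one = x" using anti a1 a2 b1 b2 by blast
  qed
  show "\<exists>one. (\<forall>a. ldiv a a = one)
             \<and> (\<forall>x. le x one)
             \<and> (\<forall>x. mult one x = x \<and> mult x one = x)
             \<and> meet_semilattice le mult
             \<and> (\<forall>x y z. le (mult x y) z \<longleftrightarrow> le y (ldiv x z))
             \<and> brouwerian_semilattice le mult ldiv one"
    using c1 top idl core[OF RS idem top idl] R by blast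
next
  fix le :: "'a \<Rightarrow> 'a \<Rightarrow> bool" and mult ldiv rdiv one
  assume A: "residuated_monoid le mult ldiv rdiv one \<and> integrally_closed ldiv one
      \<and> (\<forall>x. mult x x = x)"
  hence RS: "residuated_semigroup le mult ldiv rdiv" and idem: "\<forall>x. mult x x = x"
    and idl: "\<forall>x. mult one x = x \<and> mult x one = x" and c1: "\<forall>x. ldiv x x = one"
    unfolding residuated_monoid_def integrally_closed_def by blast+
  have P: "poset le" and R: "\<And>x y z. (le (mult x y) z \<longleftrightarrow> le x (rdiv z y)) \<and> (le (mult x y) z \<longleftrightarrow> le y (ldiv x z))"
    using RS unfolding residuated_semigroup_def by blast+
  have refl: "\<And>x. le x x"
    using P unfolding poset_def by blast+
  have top: "\<forall>x. le x one"
  proof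
    fix x have "le (mult x x) x" using idem refl by simp
    thus "le x one" using R c1 by metis
  qed
  show "brouwerian_semilattice le mult ldiv one" using core[OF RS idem top idl] by blast
qed

end
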